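(* Let $S$ be a multiplicatively closed subset of an $r$-lattice $L$ (with $1\in S$, $0\notin S$). Then: (1) if $j$ is a principal element and $i$ is an $S$-compact element of $L$, then $i\cdot j$ is $S$-compact; (2) if $k$ is a compact element and $i$ is an $S$-compact element of $L$, then $k\vee i$ is $S$-compact.
   Context: A multiplicative lattice is a complete lattice with a commutative, associative multiplication distributing over arbitrary joins, with $1$ as identity; $L_*$ is the set of compact elements; $(a:b)=\bigvee\{x\mid xb\le a\}$. An element $m$ is principal if $a\wedge mb=m((a:m)\wedge b)$ and $a\vee(b:m)=(am\vee b):m$ for all $a,b$. An $r$-lattice is a modular, principally generated, compactly generated multiplicative lattice with $1$ compact. A multiplicatively closed subset is a nonempty $S\subseteq L_*$ closed under multiplication. An element $a$ is $S$-compact if there exist a compact $b$ and $s\in S$ with $s\cdot a\le b\le a$. *)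

theory Defs
  imports Main
begin

text \<open>Multiplicative lattices: a complete lattice with a commutative, associative
multiplication distributing over arbitrary joins, whose identity is the top element
(written 1 in the paper).\<close>

definition mult_lattice :: "('a::complete_lattice \<Rightarrow> 'a \<Rightarrow> 'a) \<Rightarrow> bool" where
  "mult_lattice mul \<longleftrightarrow>
     (\<forall>a b. mul a b = mul b a) \<and>
     (\<forall>a b c. mul (mul a b) c = mul a (mul b c)) \<and>
     (\<forall>a B. mul a (Sup B) = Sup (mul a ` B)) \<and>
     (\<forall>a. mul a top = a)"

definition compact_el :: "'a::complete_lattice \<Rightarrow> bool" where
  "compact_el a \<longleftrightarrow> (\<forall>B. a \<le> Sup B \<longrightarrow> (\<exists>F. finite F \<and> F \<subseteq> B \<and> a \<le> Sup F))"

definition residual :: "('a::complete_lattice \<Rightarrow> 'a \<Rightarrow> 'a) \<Rightarrow> 'a \<Rightarrow> 'a \<Rightarrow> 'a" where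
  "residual mul a b = Sup {x. mul x b \<le> a}"

definition principal_el :: "('a::complete_lattice \<Rightarrow> 'a \<Rightarrow> 'a) \<Rightarrow> 'a \<Rightarrow> bool" where
  "principal_el mul m \<longleftrightarrow>
     (\<forall>a b. inf a (mul m b) = mul m (inf (residual mul a m) b)) \<and>
     (\<forall>a b. sup a (residual mul b m) = residual mul (sup (mul a m) b) m)"

definition r_lattice :: "('a::complete_lattice \<Rightarrow> 'a \<Rightarrow> 'a) \<Rightarrow> bool" where
  "r_lattice mul \<longleftrightarrow>
     mult_lattice mul \<and>
     (\<forall>a b c::'a. a \<le> c \<longrightarrow> sup a (inf b c) = inf (sup a b) c) \<and>
     (\<forall>a::'a. \<exists>P. (\<forall>p\<in>P. principal_el mul p) \<and> a = Sup P) \<and>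
     (\<forall>a::'a. \<exists>C. (\<forall>c\<in>C. compact_el c) \<and> a = Sup C) \<and>
     compact_el (top::'a)"

definition mult_closed :: "('a::complete_lattice \<Rightarrow> 'a \<Rightarrow> 'a) \<Rightarrow> 'a set \<Rightarrow> bool" where
  "mult_closed mul S \<longleftrightarrow> S \<noteq> {} \<and> (\<forall>s\<in>S. compact_el s) \<and> (\<forall>s\<in>S. \<forall>t\<in>S. mul s t \<in> S)"

definition S_compact :: "('a::complete_lattice \<Rightarrow> 'a \<Rightarrow> 'a) \<Rightarrow> 'a set \<Rightarrow> 'a \<Rightarrow> bool" where
  "S_compact mul S a \<longleftrightarrow> (\<exists>b s. compact_el b \<and> s \<in> S \<and> mul s a \<le> b \<and> b \<le> a)"

end

theory Submission
  imports Defs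
begin

definition dirset :: "'a::complete_lattice set \<Rightarrow> bool" where
  "dirset D \<longleftrightarrow> (\<forall>G. finite G \<and> G \<subseteq> D \<longrightarrow> (\<exists>d\<in>D. Sup G \<le> d))"

lemma ml_comm: "mult_lattice mul \<Longrightarrow> mul a b = mul b a"
  unfolding mult_lattice_def by blast
lemma ml_assoc: "mult_lattice mul \<Longrightarrow> mul (mul a b) c = mul a (mul b c)"
  unfolding mult_lattice_def by blast
lemma ml_Sup: "mult_lattice mul \<Longrightarrow> mul a (Sup B) = Sup (mul a ` B)"
  unfolding mult_lattice_def by blast
lemma ml_top: "mult_lattice mul \<Longrightarrow> mul a top = a"
  unfolding mult_lattice_def by blast

lemma ml_sup: assumes "mult_lattice mul" shows "mul a (sup b c) = sup (mul a b) (mul a c)"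
  using ml_Sup[OF assms, of a "{b,c}"] by simp

lemma ml_mono_r: assumes "mult_lattice mul" "b \<le> c" shows "mul a b \<le> mul a c"
proof -
  have "mul a c = sup (mul a b) (mul a c)" using ml_sup[OF assms(1), of a b c] assms(2)
    by (simp add: sup_absorb2)
  then show ?thesis by (metis sup_ge1)
qed

lemma ml_mono_l: assumes "mult_lattice mul" "b \<le> c" shows "mul b a \<le> mul c a"
  using ml_mono_r[OF assms] ml_comm[OF assms(1)] by metis

lemma ml_le_left: assumes "mult_lattice mul" shows "mul a b \<le> a"
  using ml_mono_r[OF assms, of b top a] ml_top[OF assms] by simp

lemma res_mul: assumes "mult_lattice mul" shows "mul (residual mul a p) p \<le> a"
proof -
  have "mul (residual mul a p) p = mul p (Sup {x. mul x p \<le> a})"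
    unfolding residual_def using ml_comm[OF assms] by metis
  also have "\<dots> = Sup (mul p ` {x. mul x p \<le> a})" using ml_Sup[OF assms] by blast
  also have "\<dots> \<le> a" using ml_comm[OF assms] by (auto intro!: Sup_least)
  finally show ?thesis .
qed

lemma res_ge: "mul x p \<le> a \<Longrightarrow> x \<le> residual mul a p"
  unfolding residual_def by (auto intro: Sup_upper)

lemma res_mono: assumes "mult_lattice mul" "a \<le> a'" shows "residual mul a p \<le> residual mul a' p"
  unfolding residual_def by (rule Sup_subset_mono) (use assms in auto)

lemma compact_dir: assumes "compact_el x" "dirset D" "x \<le> Sup D" shows "\<exists>d\<in>D. x \<le> d"
proof -
  obtain F where "finite F" "F \<subseteq> D" "x \<le> Sup F" using assms(1,3) unfolding compact_el_def by blast
  then obtain d where "d \<in> D" "Sup F \<le> d" using assms(2) unfolding dirset_def by blast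
  then show ?thesis using \<open>x \<le> Sup F\<close> by (meson order_trans)
qed

lemma dir_compact:
  assumes "\<And>D. dirset D \<Longrightarrow> x \<le> Sup D \<Longrightarrow> \<exists>d\<in>D. x \<le> d"
  shows "compact_el (x::'a::complete_lattice)"
  unfolding compact_el_def
proof (intro allI impI)
  fix B :: "'a set" assume xB: "x \<le> Sup B"
  define D where "D = Sup ` {F. finite F \<and> F \<subseteq> B}"
  have dD: "dirset D" unfolding dirset_def
  proof (intro allI impI)
    fix G assume G: "finite G \<and> G \<subseteq> D"
    then obtain FF where FF: "FF \<subseteq> {F. finite F \<and> F \<subseteq> B}" "finite FF" "G = Sup ` FF"
      unfolding D_def by (meson finite_subset_image)
    have "\<Union>FF \<subseteq> B" "finite (\<Union>FF)" using FF by auto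
    hence "Sup (\<Union>FF) \<in> D" unfolding D_def by blast
    moreover have "Sup G \<le> Sup (\<Union>FF)" unfolding FF(3)
      by (rule SUP_least, rule Sup_subset_mono) auto
    ultimately show "\<exists>d\<in>D. Sup G \<le> d" by blast
  qed
  have "Sup B \<le> Sup D" unfolding D_def
  proof (rule Sup_least)
    fix b assume "b \<in> B"
    hence "Sup {b} \<in> Sup ` {F. finite F \<and> F \<subseteq> B}" by blast
    then show "b \<le> Sup (Sup ` {F. finite F \<and> F \<subseteq> B})" by (metis Sup_upper cSup_singleton)
  qed
  then obtain d where "d \<in> D" "x \<le> d" using assms[OF dD] xB by (meson order_trans)
  then show "\<exists>F. finite F \<and> F \<subseteq> B \<and> x \<le> Sup F" unfolding D_def by blast
qed

lemma meet_cont: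
  assumes cg: "\<forall>a::'a::complete_lattice. \<exists>C. (\<forall>c\<in>C. compact_el c) \<and> a = Sup C"
    and D: "dirset D"
  shows "inf (y::'a) (Sup D) \<le> Sup ((\<lambda>d. inf y d) ` D)"
proof -
  have "\<exists>C. (\<forall>c\<in>C. compact_el c) \<and> inf y (Sup D) = Sup C" using cg by (rule spec)
  then obtain K where K: "\<forall>c\<in>K. compact_el c" "inf y (Sup D) = Sup K" by (elim exE conjE)
  have "k \<le> Sup ((\<lambda>d. inf y d) ` D)" if "k \<in> K" for k
  proof -
    have "k \<le> inf y (Sup D)" unfolding K(2) using that by (rule Sup_upper)
    hence ky: "k \<le> y" "k \<le> Sup D" by auto
    have "compact_el k" using K(1) that by blast
    then obtain d where "d \<in> D" "k \<le> d" using compact_dir[OF _ D ky(2)] by blast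
    hence "k \<le> inf y d" using ky by (rule_tac le_infI) auto
    also have "inf y d \<le> Sup ((\<lambda>d. inf y d) ` D)" using \<open>d \<in> D\<close> by (rule SUP_upper)
    finally show ?thesis .
  qed
  then show ?thesis unfolding K(2) by (rule Sup_least)
qed

lemma lemA:
  assumes ml: "mult_lattice (mul::'a::complete_lattice \<Rightarrow> 'a \<Rightarrow> 'a)"
    and cg: "\<forall>a::'a::complete_lattice. \<exists>C. (\<forall>c\<in>C. compact_el c) \<and> a = Sup C"
    and p: "principal_el mul p" and D: "dirset D"
  shows "residual mul (Sup D) p \<le> Sup ((\<lambda>d. residual mul d p) ` D)"
proof -
  define r where "r = residual mul (Sup D) p"
  define a where "a = Sup ((\<lambda>d. residual mul d p) ` D)"
  have mp: "\<And>x y. inf x (mul p y) = mul p (inf (residual mul x p) y)"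
    and jp: "\<And>x y. sup x (residual mul y p) = residual mul (sup (mul x p) y) p"
    using p unfolding principal_el_def by blast+
  have Dne: "D \<noteq> {}" using D unfolding dirset_def by (metis empty_iff empty_subsetI finite.emptyI)
  have e1: "inf (Sup D) p = mul p r" using mp[of "Sup D" top] ml_top[OF ml] unfolding r_def by simp
  have "inf (Sup D) p = inf p (Sup D)" by (simp add: inf_commute)
  also have "\<dots> \<le> Sup ((\<lambda>d. inf p d) ` D)" by (rule meet_cont[OF cg D])
  also have "\<dots> = Sup ((\<lambda>d. mul p (residual mul d p)) ` D)"
  proof -
    have "inf p d = mul p (residual mul d p)" for d
      using mp[of d top] ml_top[OF ml] by (simp add: inf_commute)
    then show ?thesis by simp
  qed
  also have "\<dots> = mul p a" unfolding a_def using ml_Sup[OF ml, of p] by (simp add: image_image)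
  finally have pr: "mul p r \<le> mul p a" using e1 by simp
  have "sup a (residual mul bot p) = residual mul (sup (mul a p) bot) p" by (rule jp)
  hence "sup a (residual mul bot p) = residual mul (mul p a) p" using ml_comm[OF ml] by simp
  moreover have "r \<le> residual mul (mul p a) p"
    by (rule res_ge) (use pr ml_comm[OF ml] in metis)
  moreover have "residual mul bot p \<le> a"
  proof -
    obtain d where "d \<in> D" using Dne by blast
    have "residual mul bot p \<le> residual mul d p" by (rule res_mono[OF ml]) simp
    also have "\<dots> \<le> a" unfolding a_def using \<open>d \<in> D\<close> by (rule SUP_upper)
    finally show ?thesis .
  qed
  ultimately show ?thesis unfolding r_def[symmetric] a_def[symmetric]
    by (metis sup_absorb1)
qed

lemma lemB:
  assumes ml: "mult_lattice (mul::'a::complete_lattice \<Rightarrow> 'a \<Rightarrow> 'a)"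
    and cg: "\<forall>a::'a::complete_lattice. \<exists>C. (\<forall>c\<in>C. compact_el c) \<and> a = Sup C"
    and p: "principal_el mul p" and x: "compact_el x"
  shows "compact_el (mul x p)"
proof (rule dir_compact)
  fix D assume D: "dirset D" and xp: "mul x p \<le> Sup D"
  have "x \<le> residual mul (Sup D) p" by (rule res_ge) (rule xp)
  also have "\<dots> \<le> Sup ((\<lambda>d. residual mul d p) ` D)" by (rule lemA[OF ml cg p D])
  finally obtain G where G: "finite G" "G \<subseteq> (\<lambda>d. residual mul d p) ` D" "x \<le> Sup G"
    using x unfolding compact_el_def by blast
  then obtain F where F: "F \<subseteq> D" "finite F" "G = (\<lambda>d. residual mul d p) ` F"
    by (meson finite_subset_image)
  then obtain d0 where d0: "d0 \<in> D" "Sup F \<le> d0" using D unfolding dirset_def by blast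
  have "Sup G \<le> residual mul d0 p" unfolding F(3)
  proof (rule SUP_least)
    fix d assume "d \<in> F"
    hence "d \<le> d0" using d0(2) by (meson Sup_upper order_trans)
    then show "residual mul d p \<le> residual mul d0 p" by (rule res_mono[OF ml])
  qed
  hence "x \<le> residual mul d0 p" using G(3) by simp
  hence "mul x p \<le> mul (residual mul d0 p) p" by (rule ml_mono_l[OF ml])
  also have "\<dots> \<le> d0" by (rule res_mul[OF ml])
  finally show "\<exists>d\<in>D. mul x p \<le> d" using d0 by blast
qed

lemma compact_sup: assumes "compact_el a" "compact_el b" shows "compact_el (sup a b)"
  unfolding compact_el_def
proof (intro allI impI)
  fix B assume "sup a b \<le> Sup B"
  hence "a \<le> Sup B" "b \<le> Sup B" by auto
  then obtain F1 F2 where "finite F1" "F1 \<subseteq> B" "a \<le> Sup F1" "finite F2" "F2 \<subseteq> B" "b \<le> Sup F2"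
    using assms unfolding compact_el_def by meson
  then show "\<exists>F. finite F \<and> F \<subseteq> B \<and> sup a b \<le> Sup F"
    by (intro exI[of _ "F1 \<union> F2"]) (auto simp: Sup_union_distrib intro: le_supI1 le_supI2)
qed

theorem mainTheorem7:
  fixes mul :: "'a::complete_lattice \<Rightarrow> 'a \<Rightarrow> 'a" and S :: "'a set"
  assumes "r_lattice mul"
    and "mult_closed mul S"
    and "top \<in> S"
    and "bot \<notin> S"
  shows "(\<forall>i j. principal_el mul j \<and> S_compact mul S i \<longrightarrow> S_compact mul S (mul i j)) \<and>
         (\<forall>i k. compact_el k \<and> S_compact mul S i \<longrightarrow> S_compact mul S (sup k i))"
proof -
  have ml: "mult_lattice mul" and cg: "\<forall>a::'a. \<exists>C. (\<forall>c\<in>C. compact_el c) \<and> a = Sup C"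
    using assms(1) unfolding r_lattice_def by blast+
  show ?thesis
  proof (intro conjI allI impI)
    fix i j :: 'a assume h: "principal_el mul j \<and> S_compact mul S i"
    then obtain b s where bs: "compact_el b" "s \<in> S" "mul s i \<le> b" "b \<le> i"
      unfolding S_compact_def by blast
    have "compact_el (mul b j)" using lemB[OF ml cg _ bs(1)] h by blast
    moreover have "mul s (mul i j) \<le> mul b j"
      using ml_assoc[OF ml, of s i j] ml_mono_l[OF ml bs(3)] by metis
    moreover have "mul b j \<le> mul i j" by (rule ml_mono_l[OF ml bs(4)])
    ultimately show "S_compact mul S (mul i j)" unfolding S_compact_def using bs(2) by blast
  next
    fix i k :: 'a assume h: "compact_el k \<and> S_compact mul S i"
    then obtain b s where bs: "compact_el b" "s \<in> S" "mul s i \<le> b" "b \<le> i"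
      unfolding S_compact_def by blast
    have "compact_el (sup k b)" using compact_sup h bs(1) by blast
    moreover have "mul s (sup k i) \<le> sup k b"
    proof -
      have "mul s k \<le> k" using ml_le_left[OF ml, of k s] ml_comm[OF ml] by metis
      then show ?thesis using ml_sup[OF ml, of s k i] bs(3) by (simp add: le_supI1 le_supI2)
    qed
    moreover have "sup k b \<le> sup k i" using bs(4) by (simp add: le_supI2)
    ultimately show "S_compact mul S (sup k i)" unfolding S_compact_def using bs(2) by blast
  qed
qed

end
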